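(* Let $r\ge 3$ and let $\mathcal H=(V,E)$ be an $r$-uniform bi-hypergraph. Suppose $V$ has a partition $V_1,\dots,V_k$ such that each $V_i$ is an independent set of $\mathcal H$, and for each edge $e\in E$ there are indices $i_1,\dots,i_q\in[k]$ with $q<r$ and $e\subseteq V_{i_1}\cup\dots\cup V_{i_q}$. Then $\mathcal H$ is colorable.
   Context: A bi-hypergraph $\mathcal H=(V,E)$ consists of a finite vertex set $V$ and a set $E$ of subsets of $V$, called edges, with no edge contained in another. It is $r$-uniform if every edge has exactly $r$ elements. A set $S\subseteq V$ is independent if no edge of $\mathcal H$ is contained in $S$. A mapping $f:V\to\mathbb N$ is a proper coloring of $\mathcal H$ if $1<|f(e)|<|e|$ for every $e\in E$, where $f(e)=\{f(v):v\in e\}$. $\mathcal H$ is colorable if it has a proper coloring. $[k]=\{1,\dots,k\}$. *)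

theory Defs
  imports Main
begin

definition bi_hypergraph :: "'a set \<Rightarrow> 'a set set \<Rightarrow> bool" where
  "bi_hypergraph V E \<longleftrightarrow> finite V \<and> (\<forall>e\<in>E. e \<subseteq> V) \<and>
     (\<forall>e\<in>E. \<forall>e'\<in>E. e \<subseteq> e' \<longrightarrow> e = e')"

definition uniform :: "nat \<Rightarrow> 'a set set \<Rightarrow> bool" where
  "uniform r E \<longleftrightarrow> (\<forall>e\<in>E. card e = r)"

definition independent :: "'a set set \<Rightarrow> 'a set \<Rightarrow> bool" where
  "independent E S \<longleftrightarrow> (\<forall>e\<in>E. \<not> e \<subseteq> S)"

definition proper_coloring :: "'a set \<Rightarrow> 'a set set \<Rightarrow> ('a \<Rightarrow> nat) \<Rightarrow> bool" where
  "proper_coloring V E f \<longleftrightarrow> (\<forall>e\<in>E. 1 < card (f ` e) \<and> card (f ` e) < card e)"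

definition colorable :: "'a set \<Rightarrow> 'a set set \<Rightarrow> bool" where
  "colorable V E \<longleftrightarrow> (\<exists>f. proper_coloring V E f)"

end

theory Submission
  imports Defs
begin

theorem mainTheorem6:
  fixes V :: "'a set" and E :: "'a set set" and r k :: nat and P :: "nat \<Rightarrow> 'a set"
  assumes "r \<ge> 3"
    and "bi_hypergraph V E"
    and "uniform r E"
    and part_nonempty: "\<forall>i\<in>{1..k}. P i \<noteq> {}"
    and part_disjoint: "\<forall>i\<in>{1..k}. \<forall>j\<in>{1..k}. i \<noteq> j \<longrightarrow> P i \<inter> P j = {}"
    and part_cover: "(\<Union>i\<in>{1..k}. P i) = V"
    and indep: "\<forall>i\<in>{1..k}. independent E (P i)"
    and few_parts: "\<forall>e\<in>E. \<exists>I \<subseteq> {1..k}. card I < r \<and> e \<subseteq> (\<Union>i\<in>I. P i)"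
  shows "colorable V E"
proof -
  define f where "f v = (SOME i. i \<in> {1..k} \<and> v \<in> P i)" for v
  have fv: "f v = j" if "j \<in> {1..k}" "v \<in> P j" for v j
  proof -
    have ex: "\<exists>i. i \<in> {1..k} \<and> v \<in> P i" using that by blast
    have "f v \<in> {1..k} \<and> v \<in> P (f v)" unfolding f_def by (rule someI_ex[OF ex])
    then have "f v \<in> {1..k}" "v \<in> P (f v)" by auto
    moreover have "P (f v) \<inter> P j = {} \<or> f v = j" using part_disjoint that(1) calculation(1) by blast
    ultimately show ?thesis using that(2) by blast
  qed
  have "proper_coloring V E f"
    unfolding proper_coloring_def
  proof
    fix e assume e: "e \<in> E"
    have ce: "card e = r" using assms(3) e unfolding uniform_def by auto
    have c3: "card e > 0" using ce assms(1) by simp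
    have fin: "finite e" using c3 by (rule card_ge_0_finite)
    have ne: "e \<noteq> {}" using c3 by auto
    obtain I where I: "I \<subseteq> {1..k}" "card I < r" "e \<subseteq> (\<Union>i\<in>I. P i)"
      using bspec[OF few_parts e] by (elim exE conjE) assumption
    have sub: "f ` e \<subseteq> I"
    proof
      fix x assume "x \<in> f ` e"
      then obtain v where v: "v \<in> e" "x = f v" by blast
      obtain j where "j \<in> I" "v \<in> P j" using I(3) v(1) by blast
      moreover have "f v = j" using fv[of j v] I(1) \<open>j \<in> I\<close> \<open>v \<in> P j\<close> by blast
      ultimately show "x \<in> I" using v(2) by simp
    qed
    have finI: "finite I" using finite_subset[OF I(1)] by simp
    have c1: "card (f ` e) < card e" using card_mono[OF finI sub] I(2) ce by simp
    have c2: "1 < card (f ` e)"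
    proof (rule ccontr)
      assume "\<not> 1 < card (f ` e)"
      moreover have "card (f ` e) \<noteq> 0" using fin ne by simp
      ultimately have "card (f ` e) = 1" by simp
      then obtain j where j: "f ` e = {j}" using card_1_singletonE by blast
      then have "j \<in> I" using sub by auto
      then have jk: "j \<in> {1..k}" using I(1) by auto
      have "e \<subseteq> P j"
      proof
        fix v assume v: "v \<in> e"
        then obtain i where i: "i \<in> I" "v \<in> P i" using I(3) by blast
        then have "f v = i" using fv[of i v] I(1) by blast
        moreover have "f v = j" using j v by auto
        ultimately show "v \<in> P j" using i by simp
      qed
      then show False using indep jk e unfolding independent_def by blast
    qed
    show "1 < card (f ` e) \<and> card (f ` e) < card e" using c1 c2 by simp
  qed
  then show ?thesis unfolding colorable_def by blast
qed

end
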